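(* Consider a time-invariant UMCO channel $\mathbf P(b_i|b_{i-1},a_i)$ on finite alphabets $\mathbb A,\mathbb B$. Let $\widetilde V_0\equiv0$ and, for $t\ge1$, $$\widetilde V_t(b_{-1})=\sup_{\pi(\cdot|b_{-1})}\sum_{a_0}\Big\{\sum_{b_0}\log\frac{\mathbf P(b_0|b_{-1},a_0)}{\mathbf P^{\pi}(b_0|b_{-1})}\mathbf P(b_0|b_{-1},a_0)+\sum_{b_0}\widetilde V_{t-1}(b_0)\mathbf P(b_0|b_{-1},a_0)\Big\}\pi(a_0|b_{-1}).$$ Assume there exist $V:\mathbb B\to\mathbb R$ and $J^*\in\mathbb R$ with $\lim_{t\to\infty}(\widetilde V_t(b_{-1})-tJ^* )=V(b_{-1})$ for all $b_{-1}\in\mathbb B$, and that there exist $\{\pi^{\infty,*}(\cdot|b_{-1})\}$ and the pair $(V,J^* )$ solving $$J^*+V(b_{-1})=\sup_{\pi(\cdot|b_{-1})}\sum_{a_0}\Big\{\sum_{b_0}\log\frac{\mathbf P(b_0|b_{-1},a_0)}{\mathbf P^{\pi}(b_0|b_{-1})}\mathbf P(b_0|b_{-1},a_0)+\sum_{b_0}V(b_0)\mathbf P(b_0|b_{-1},a_0)\Big\}\pi(a_0|b_{-1}).$$ Then for every initial distribution $\mu$ of $B_{-1}$, $$J^*=C^{FB,UMCO}_{A^\infty\to B^\infty}=\liminf_{n\to\infty}\frac1n\sup_{\pi^\infty}\mathbf E^{\pi^\infty}_\mu\Big[\sum_{i=0}^{n-1}\log\frac{\mathbf P(B_i|B_{i-1},A_i)}{\mathbf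 P^{\pi^\infty}(B_i|B_{i-1})}\Big],$$ and in particular this value does not depend on $\mu$.
   Context: Time-invariant UMCO channel: channel $\mathbf P(b_i|b_{i-1},a_i)$ on finite alphabets $\mathbb A,\mathbb B$, with the initial state $B_{-1}\sim\mu$. Input distributions $\pi^\infty(a_i|b_{i-1})$ (time-invariant), output transitions $\mathbf P^{\pi}(b_i|b_{i-1})=\sum_a\mathbf P(b_i|b_{i-1},a)\pi(a|b_{i-1})$. Logarithms base 2. *)

theory Defs
  imports "HOL-Analysis.Analysis"
begin

definition distr :: "('x::finite \<Rightarrow> real) \<Rightarrow> bool" where
  "distr d \<longleftrightarrow> (\<forall>x. 0 \<le> d x) \<and> sum d UNIV = 1"

text \<open>Channel P b' a b = P(b_i = b | b_{i-1} = b', a_i = a).\<close>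
definition channel :: "('b::finite \<Rightarrow> 'a::finite \<Rightarrow> 'b \<Rightarrow> real) \<Rightarrow> bool" where
  "channel P \<longleftrightarrow> (\<forall>b' a. distr (P b' a))"

text \<open>Time-invariant input distribution q a|b' written q b' a.\<close>
definition policy :: "('b::finite \<Rightarrow> 'a::finite \<Rightarrow> real) \<Rightarrow> bool" where
  "policy q \<longleftrightarrow> (\<forall>b'. distr (q b'))"

text \<open>Output transition P^q(b|b') induced by the distribution d = q(.|b').\<close>
definition Pout :: "('b::finite \<Rightarrow> 'a::finite \<Rightarrow> 'b \<Rightarrow> real) \<Rightarrow> ('a \<Rightarrow> real) \<Rightarrow> 'b \<Rightarrow> 'b \<Rightarrow> real" where
  "Pout P d b' b = (\<Sum>a\<in>UNIV. P b' a b * d a)"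

text \<open>The expression inside the supremum of the dynamic programming / ACOE equations.\<close>
definition stage :: "('b::finite \<Rightarrow> 'a::finite \<Rightarrow> 'b \<Rightarrow> real) \<Rightarrow> ('b \<Rightarrow> real) \<Rightarrow> 'b \<Rightarrow> ('a \<Rightarrow> real) \<Rightarrow> real" where
  "stage P W b' d =
     (\<Sum>a\<in>UNIV. ((\<Sum>b\<in>UNIV. log 2 (P b' a b / Pout P d b' b) * P b' a b)
                 + (\<Sum>b\<in>UNIV. W b * P b' a b)) * d a)"

primrec Vt :: "('b::finite \<Rightarrow> 'a::finite \<Rightarrow> 'b \<Rightarrow> real) \<Rightarrow> nat \<Rightarrow> 'b \<Rightarrow> real" where
  "Vt P 0 = (\<lambda>_. 0)"
| "Vt P (Suc t) = (\<lambda>b'. SUP d\<in>{d. distr d}. stage P (Vt P t) b' d)"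

text \<open>Joint probability of (B_{-1},A_0,B_0,...,A_{n-1},B_{n-1}); bs ! i stands for B_{i-1},
  as ! i for A_i.\<close>
definition path_prob :: "('b::finite \<Rightarrow> 'a::finite \<Rightarrow> 'b \<Rightarrow> real) \<Rightarrow> ('b \<Rightarrow> 'a \<Rightarrow> real)
    \<Rightarrow> ('b \<Rightarrow> real) \<Rightarrow> nat \<Rightarrow> 'b list \<Rightarrow> 'a list \<Rightarrow> real" where
  "path_prob P q mu n bs as =
     mu (bs ! 0) * (\<Prod>i<n. q (bs ! i) (as ! i) * P (bs ! i) (as ! i) (bs ! Suc i))"

definition exp_reward :: "('b::finite \<Rightarrow> 'a::finite \<Rightarrow> 'b \<Rightarrow> real) \<Rightarrow> ('b \<Rightarrow> 'a \<Rightarrow> real)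
    \<Rightarrow> ('b \<Rightarrow> real) \<Rightarrow> nat \<Rightarrow> real" where
  "exp_reward P q mu n =
     (\<Sum>bs\<in>{xs. length xs = Suc n}. \<Sum>as\<in>{xs. length xs = n}.
        path_prob P q mu n bs as *
        (\<Sum>i<n. log 2 (P (bs ! i) (as ! i) (bs ! Suc i) / Pout P (q (bs ! i)) (bs ! i) (bs ! Suc i))))"

definition C_FB_UMCO :: "('b::finite \<Rightarrow> 'a::finite \<Rightarrow> 'b \<Rightarrow> real) \<Rightarrow> ('b \<Rightarrow> real) \<Rightarrow> ereal" where
  "C_FB_UMCO P mu =
     liminf (\<lambda>n. ereal (1 / real n * (SUP q\<in>{q. policy q}. exp_reward P q mu n)))"

end

theory Submission
  imports Defs
begin

primrec G :: "('b::finite \<Rightarrow> 'a::finite \<Rightarrow> 'b \<Rightarrow> real) \<Rightarrow> ('b \<Rightarrow> 'a \<Rightarrow> real)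
   \<Rightarrow> ('b \<Rightarrow> 'a \<Rightarrow> 'b \<Rightarrow> real) \<Rightarrow> nat \<Rightarrow> ('b \<Rightarrow> real) \<Rightarrow> 'b \<Rightarrow> real" where
  "G P q r 0 W b = W b"
| "G P q r (Suc n) W b = (\<Sum>a\<in>UNIV. q b a * (\<Sum>c\<in>UNIV. P b a c * (r b a c + G P q r n W c)))"

lemma fin_len: "finite {xs::'x::finite list. length xs = k}"
  using finite_lists_length_eq[of "UNIV::'x set" k] by simp

lemma sum_len_Suc:
  "(\<Sum>xs\<in>{xs::'x::finite list. length xs = Suc k}. f xs) = (\<Sum>x\<in>UNIV. \<Sum>xs\<in>{xs. length xs = k}. f (x#xs))"
proof -
  have e: "{xs::'x list. length xs = Suc k} = (\<lambda>(x,xs). x#xs) ` (UNIV \<times> {xs. length xs = k})"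
    by (auto simp: length_Suc_conv image_iff)
  have i: "inj_on (\<lambda>(x,xs). x#xs) (UNIV \<times> {xs::'x list. length xs = k})"
    by (auto simp: inj_on_def)
  show ?thesis unfolding e sum.reindex[OF i]
    by (simp add: sum.cartesian_product split_beta)
qed

lemma len0: "{xs. length xs = 0} = {[]}" by auto

lemma path_prob_Cons:
  "path_prob P q m (Suc n) (b#bs) (a#as) = path_prob P q (\<lambda>c. m b * q b a * P b a c) n bs as"
  unfolding path_prob_def prod.lessThan_Suc_shift by (simp add: mult.assoc)

lemma S_eq:
  assumes ch: "channel P" and pq: "policy q"
  shows "(\<Sum>bs\<in>{xs. length xs = Suc n}. \<Sum>as\<in>{xs. length xs = n}.
      path_prob P q m n bs as * (U (bs!0) + (\<Sum>i<n. r (bs!i) (as!i) (bs!Suc i)) + W (bs!n)))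
    = (\<Sum>b\<in>UNIV. m b * (U b + G P q r n W b))"
proof (induction n arbitrary: m U)
  case 0
  show ?case by (simp add: sum_len_Suc len0 path_prob_def)
next
  case (Suc n)
  have sP: "\<And>b a. (\<Sum>c\<in>UNIV. P b a c) = 1" using ch by (simp add: channel_def distr_def)
  have sq: "\<And>b. (\<Sum>a\<in>UNIV. q b a) = 1" using pq by (simp add: policy_def distr_def)
  have "(\<Sum>bs\<in>{xs. length xs = Suc (Suc n)}. \<Sum>as\<in>{xs. length xs = Suc n}.
      path_prob P q m (Suc n) bs as * (U (bs!0) + (\<Sum>i<Suc n. r (bs!i) (as!i) (bs!Suc i)) + W (bs!Suc n)))
    = (\<Sum>b\<in>UNIV. \<Sum>bs\<in>{xs. length xs = Suc n}. \<Sum>a\<in>UNIV. \<Sum>as\<in>{xs. length xs = n}.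
      path_prob P q (\<lambda>c. m b * q b a * P b a c) n bs as * ((U b + r b a (bs!0)) + (\<Sum>i<n. r (bs!i) (as!i) (bs!Suc i)) + W (bs!n)))"
    apply (subst sum_len_Suc)
    apply (subst sum_len_Suc[where 'x='a])
    apply (simp only: sum.lessThan_Suc_shift)
    apply (simp add: path_prob_Cons add.assoc)
    done
  also have "\<dots> = (\<Sum>b\<in>UNIV. \<Sum>a\<in>UNIV. \<Sum>bs\<in>{xs. length xs = Suc n}. \<Sum>as\<in>{xs. length xs = n}.
      path_prob P q (\<lambda>c. m b * q b a * P b a c) n bs as * ((\<lambda>c. U b + r b a c) (bs!0) + (\<Sum>i<n. r (bs!i) (as!i) (bs!Suc i)) + W (bs!n)))"
    by (rule sum.cong[OF refl], rule sum.swap)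
  also have "\<dots> = (\<Sum>b\<in>UNIV. \<Sum>a\<in>UNIV. \<Sum>c\<in>UNIV. m b * q b a * P b a c * (U b + r b a c + G P q r n W c))"
    apply (intro sum.cong[OF refl])
    subgoal for b a using Suc.IH[of "\<lambda>c. m b * q b a * P b a c" "\<lambda>c. U b + r b a c"] by simp
    done
  also have "\<dots> = (\<Sum>b\<in>UNIV. m b * (U b + G P q r (Suc n) W b))"
  proof (rule sum.cong[OF refl])
    fix b
    have "(\<Sum>a\<in>UNIV. \<Sum>c\<in>UNIV. m b * q b a * P b a c * (U b + r b a c + G P q r n W c))
        = (\<Sum>a\<in>UNIV. m b * U b * q b a * (\<Sum>c\<in>UNIV. P b a c) + m b * (q b a * (\<Sum>c\<in>UNIV. P b a c * (r b a c + G P q r n W c))))"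
      by (simp add: sum_distrib_left sum.distrib algebra_simps)
    also have "\<dots> = m b * U b * (\<Sum>a\<in>UNIV. q b a) + m b * (\<Sum>a\<in>UNIV. q b a * (\<Sum>c\<in>UNIV. P b a c * (r b a c + G P q r n W c)))"
      by (simp add: sP sum.distrib sum_distrib_left)
    finally show "(\<Sum>a\<in>UNIV. \<Sum>c\<in>UNIV. m b * q b a * P b a c * (U b + r b a c + G P q r n W c))
        = m b * (U b + G P q r (Suc n) W b)" by (simp add: sq algebra_simps)
  qed
  finally show ?case .
qed

lemma key_log:
  fixes p x s :: real
  assumes "0 < p" "0 < x" "p * x \<le> s"
  shows "log 2 (p / s) * x \<le> 1 / ln 2"
proof -
  have s0: "0 < s" using assms by (smt (verit) mult_pos_pos)
  have "p / s \<le> 1 / x" using assms s0 by (simp add: field_simps)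
  then have "log 2 (p / s) \<le> log 2 (1 / x)"
    using assms s0 by (intro log_mono) auto
  then have "log 2 (p / s) * x \<le> log 2 (1 / x) * x" using assms by (simp add: mult_right_mono)
  also have "\<dots> = ln (1 / x) * x / ln 2" by (simp add: log_def)
  also have "\<dots> \<le> (1 / x - 1) * x / ln 2"
    using ln_le_minus_one[of "1/x"] assms by (intro divide_right_mono mult_right_mono) auto
  also have "\<dots> \<le> 1 / ln 2" using assms by (simp add: field_simps)
  finally show ?thesis .
qed

lemma term_bound:
  assumes ch: "channel P" and d: "distr d"
  shows "log 2 (P b a c / Pout P d b c) * P b a c * d a \<le> P b a c / ln 2"
proof -
  have P0: "0 \<le> P b a c" using ch by (simp add: channel_def distr_def)
  have d0: "\<And>x. 0 \<le> d x" using d by (simp add: distr_def)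
  show ?thesis
  proof (cases "P b a c = 0 \<or> d a = 0")
    case True then show ?thesis using P0 by auto
  next
    case False
    then have pp: "0 < P b a c" "0 < d a" using P0 d0[of a] by auto
    have "P b a c * d a \<le> Pout P d b c"
      unfolding Pout_def
      using ch d0 by (intro member_le_sum[where f="\<lambda>a. P b a c * d a"]) (auto simp: channel_def distr_def)
    from key_log[OF pp this] have "log 2 (P b a c / Pout P d b c) * d a * P b a c \<le> 1 / ln 2 * P b a c"
      using pp by (intro mult_right_mono) auto
    then show ?thesis by (simp add: algebra_simps)
  qed
qed

lemma stage_bound:
  fixes P :: "'b::finite \<Rightarrow> 'a::finite \<Rightarrow> 'b \<Rightarrow> real"
  assumes ch: "channel P" and d: "distr d"
  shows "stage P W b d \<le> real CARD('a) / ln 2 + (\<Sum>c\<in>UNIV. \<bar>W c\<bar>)"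
    (is "_ \<le> _ + ?S")
proof -
  have d0: "\<And>x. 0 \<le> d x" and d1: "sum d UNIV = 1" using d by (auto simp: distr_def)
  have P0: "\<And>a c. 0 \<le> P b a c" and P1: "\<And>a. (\<Sum>c\<in>UNIV. P b a c) = 1"
    using ch by (auto simp: channel_def distr_def)
  have A: "(\<Sum>c\<in>UNIV. log 2 (P b a c / Pout P d b c) * P b a c) * d a \<le> 1 / ln 2" for a
  proof -
    have "(\<Sum>c\<in>UNIV. log 2 (P b a c / Pout P d b c) * P b a c) * d a
        = (\<Sum>c\<in>UNIV. log 2 (P b a c / Pout P d b c) * P b a c * d a)" by (simp add: sum_distrib_right)
    also have "\<dots> \<le> (\<Sum>c\<in>UNIV. P b a c / ln 2)" by (intro sum_mono term_bound[OF ch d])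
    also have "\<dots> = 1 / ln 2" using P1[of a] by (simp add: sum_divide_distrib[symmetric])
    finally show ?thesis .
  qed
  have B: "(\<Sum>c\<in>UNIV. W c * P b a c) \<le> ?S" for a
  proof -
    have "(\<Sum>c\<in>UNIV. W c * P b a c) \<le> (\<Sum>c\<in>UNIV. ?S * P b a c)"
      apply (intro sum_mono mult_right_mono P0)
      by (smt (verit) UNIV_I finite abs_ge_self member_le_sum abs_ge_zero)
    also have "\<dots> = ?S" using P1[of a] by (simp add: sum_distrib_left[symmetric])
    finally show ?thesis .
  qed
  have "stage P W b d = (\<Sum>a\<in>UNIV. (\<Sum>c\<in>UNIV. log 2 (P b a c / Pout P d b c) * P b a c) * d a
       + (\<Sum>c\<in>UNIV. W c * P b a c) * d a)"
    unfolding stage_def by (simp add: algebra_simps)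
  also have "\<dots> \<le> (\<Sum>a\<in>UNIV. 1 / ln 2 + ?S * d a)"
    by (intro sum_mono add_mono A mult_right_mono B d0)
  also have "\<dots> = real CARD('a) / ln 2 + ?S"
    by (simp add: sum.distrib sum_distrib_left[symmetric] d1)
  finally show ?thesis .
qed

lemma stage_bdd:
  assumes ch: "channel P"
  shows "bdd_above ((\<lambda>d. stage P W b d) ` {d. distr d})"
  using stage_bound[OF ch] by (intro bdd_aboveI) blast

lemma G_le_Vt:
  assumes ch: "channel P" and pq: "policy q"
  shows "G P q (\<lambda>b a c. log 2 (P b a c / Pout P (q b) b c)) n (\<lambda>_. 0) b \<le> Vt P n b"
proof (induction n arbitrary: b)
  case 0 then show ?case by simp
next
  case (Suc n)
  have q0: "\<And>a. 0 \<le> q b a" using pq by (simp add: policy_def distr_def)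
  have P0: "\<And>a c. 0 \<le> P b a c" using ch by (auto simp: channel_def distr_def)
  have "G P q (\<lambda>b a c. log 2 (P b a c / Pout P (q b) b c)) (Suc n) (\<lambda>_. 0) b
     \<le> (\<Sum>a\<in>UNIV. q b a * (\<Sum>c\<in>UNIV. P b a c * (log 2 (P b a c / Pout P (q b) b c) + Vt P n c)))"
    by (simp, intro sum_mono mult_left_mono q0 P0 add_left_mono Suc.IH)
  also have "\<dots> = stage P (Vt P n) b (q b)"
    unfolding stage_def by (intro sum.cong refl) (simp add: sum.distrib[symmetric] algebra_simps)
  also have "\<dots> \<le> Vt P (Suc n) b"
    using pq by (simp, intro cSUP_upper stage_bdd[OF ch]) (auto simp: policy_def)
  finally show ?case .
qed

lemma G_shift:
  assumes ch: "channel P" and pq: "policy q" and W: "\<forall>c. W c \<le> W' c + M"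
  shows "G P q r n W b \<le> G P q r n W' b + M"
proof (induction n arbitrary: b)
  case 0 then show ?case using W by simp
next
  case (Suc n)
  have q0: "\<And>a. 0 \<le> q b a" and q1: "(\<Sum>a\<in>UNIV. q b a) = 1"
    using pq by (auto simp: policy_def distr_def)
  have P0: "\<And>a c. 0 \<le> P b a c" and P1: "\<And>a. (\<Sum>c\<in>UNIV. P b a c) = 1"
    using ch by (auto simp: channel_def distr_def)
  have "G P q r (Suc n) W b \<le> (\<Sum>a\<in>UNIV. q b a * (\<Sum>c\<in>UNIV. P b a c * (r b a c + (G P q r n W' c + M))))"
    by (simp, intro sum_mono mult_left_mono q0 P0 add_left_mono Suc.IH)
  also have "\<dots> = (\<Sum>a\<in>UNIV. q b a * (\<Sum>c\<in>UNIV. P b a c * (r b a c + G P q r n W' c)) + q b a * M)"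
    by (intro sum.cong refl) (simp add: distrib_left sum.distrib sum_distrib_right[symmetric] P1)
  also have "\<dots> = G P q r (Suc n) W' b + M"
    by (simp add: sum.distrib sum_distrib_right[symmetric] q1)
  finally show ?case .
qed

lemma G_V:
  assumes ch: "channel P" and pq: "policy q"
    and st: "\<forall>b. J + V b = stage P V b (q b)"
  shows "G P q (\<lambda>b a c. log 2 (P b a c / Pout P (q b) b c)) n V b = real n * J + V b"
proof (induction n arbitrary: b)
  case 0 then show ?case by simp
next
  case (Suc n)
  have q1: "(\<Sum>a\<in>UNIV. q b a) = 1"
    using pq by (auto simp: policy_def distr_def)
  have P1: "\<And>a. (\<Sum>c\<in>UNIV. P b a c) = 1"
    using ch by (auto simp: channel_def distr_def)
  have PJ: "\<And>a. (\<Sum>c\<in>UNIV. J * (real n * P b a c)) = J * real n"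
    by (simp add: sum_distrib_left[symmetric] P1)
  have "G P q (\<lambda>b a c. log 2 (P b a c / Pout P (q b) b c)) (Suc n) V b
     = (\<Sum>a\<in>UNIV. q b a * (\<Sum>c\<in>UNIV. P b a c * (log 2 (P b a c / Pout P (q b) b c) + V c)) + q b a * (real n * J))"
    by (simp add: Suc.IH, intro sum.cong refl)
       (simp add: distrib_left sum.distrib sum_distrib_right[symmetric] P1 algebra_simps PJ)
  also have "\<dots> = stage P V b (q b) + real n * J"
    unfolding stage_def sum.distrib sum_distrib_right[symmetric] q1
    by (simp, intro sum.cong refl) (simp add: sum.distrib[symmetric] algebra_simps)
  also have "\<dots> = real (Suc n) * J + V b" using st by (simp add: algebra_simps)
  finally show ?case .
qed

lemma exp_eq:
  assumes ch: "channel P" and pq: "policy q"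
  shows "exp_reward P q mu n = (\<Sum>b\<in>UNIV. mu b * G P q (\<lambda>b a c. log 2 (P b a c / Pout P (q b) b c)) n (\<lambda>_. 0) b)"
  using S_eq[OF ch pq, of mu n "\<lambda>_. 0" "\<lambda>b a c. log 2 (P b a c / Pout P (q b) b c)" "\<lambda>_. 0"]
  unfolding exp_reward_def by simp

theorem mainTheorem6:
  fixes P :: "'b::finite \<Rightarrow> 'a::finite \<Rightarrow> 'b \<Rightarrow> real"
    and V :: "'b \<Rightarrow> real" and J :: real
    and pis :: "'b \<Rightarrow> 'a \<Rightarrow> real" and mu :: "'b \<Rightarrow> real"
  assumes "channel P"
    and "\<forall>b. (\<lambda>t. Vt P t b - real t * J) \<longlonglongrightarrow> V b"
    and "policy pis"
    and "\<forall>b. J + V b = (SUP d\<in>{d. distr d}. stage P V b d)"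
    and "\<forall>b. J + V b = stage P V b (pis b)"
    and "distr mu"
  shows "ereal J = C_FB_UMCO P mu"
proof -
  note ch = assms(1) and lim = assms(2) and pp = assms(3) and st = assms(5)
  have mu0: "\<And>b. 0 \<le> mu b" and mu1: "(\<Sum>b\<in>UNIV. mu b) = 1" using assms(6) by (auto simp: distr_def)
  define M where "M = (\<Sum>c\<in>UNIV. \<bar>V c\<bar>)"
  have VM: "\<And>c. \<bar>V c\<bar> \<le> M" unfolding M_def
    by (rule member_le_sum[where f="\<lambda>c. \<bar>V c\<bar>"]) auto
  define u where "u n = (\<Sum>b\<in>UNIV. mu b * Vt P n b)" for n
  define s where "s n = (SUP q\<in>{q. policy q}. exp_reward P q mu n)" for n
  have ub: "exp_reward P q mu n \<le> u n" if "policy q" for q n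
    unfolding exp_eq[OF ch that] u_def
    by (intro sum_mono mult_left_mono mu0 G_le_Vt[OF ch that])
  have lb: "real n * J - 2 * M \<le> exp_reward P pis mu n" for n
  proof -
    have "real n * J - 2 * M \<le> G P pis (\<lambda>b a c. log 2 (P b a c / Pout P (pis b) b c)) n (\<lambda>_. 0) b" for b
    proof -
      have "G P pis (\<lambda>b a c. log 2 (P b a c / Pout P (pis b) b c)) n V b
         \<le> G P pis (\<lambda>b a c. log 2 (P b a c / Pout P (pis b) b c)) n (\<lambda>_. 0) b + M"
        using VM by (intro G_shift[OF ch pp]) (auto simp: abs_le_iff)
      then show ?thesis unfolding G_V[OF ch pp st] using VM[of b] by (auto simp: abs_le_iff)
    qed
    then have "(\<Sum>b\<in>UNIV. mu b * (real n * J - 2 * M)) \<le> exp_reward P pis mu n"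
      unfolding exp_eq[OF ch pp] by (intro sum_mono mult_left_mono mu0)
    then show ?thesis by (simp add: sum_distrib_right[symmetric] mu1)
  qed
  have bdd: "bdd_above ((\<lambda>q. exp_reward P q mu n) ` {q. policy q})" for n
    using ub by (intro bdd_aboveI) blast
  have s_ub: "s n \<le> u n" for n
    unfolding s_def using pp ub by (intro cSUP_least) auto
  have s_lb: "real n * J - 2 * M \<le> s n" for n
    unfolding s_def using pp lb[of n] by (intro order.trans[OF _ cSUP_upper[OF _ bdd]]) auto
  have lim_u: "(\<lambda>n. 1 / real n * u n) \<longlonglongrightarrow> J"
  proof -
    have t: "(\<lambda>n. (\<Sum>b\<in>UNIV. mu b * ((Vt P n b - real n * J) * inverse (real n))) + J)
        \<longlonglongrightarrow> (\<Sum>b\<in>UNIV. mu b * (V b * 0)) + J"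
      using lim by (intro tendsto_intros lim_inverse_n) auto
    have e: "\<forall>\<^sub>F n in sequentially. (\<Sum>b\<in>UNIV. mu b * ((Vt P n b - real n * J) * inverse (real n))) + J
        = 1 / real n * u n"
      using eventually_ge_at_top[of "1::nat"]
    proof (rule eventually_mono)
      fix n :: nat assume "1 \<le> n"
      then have "(\<Sum>b\<in>UNIV. mu b * ((Vt P n b - real n * J) * inverse (real n)))
          = (\<Sum>b\<in>UNIV. mu b * Vt P n b) / real n - (\<Sum>b\<in>UNIV. mu b) * J"
      proof -
        have "(\<Sum>b\<in>UNIV. mu b * ((Vt P n b - real n * J) * inverse (real n)))
            = (\<Sum>b\<in>UNIV. mu b * Vt P n b / real n - mu b * J)"
          using \<open>1 \<le> n\<close> by (intro sum.cong refl) (simp add: field_simps)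
        then show ?thesis by (simp add: sum_subtractf sum_divide_distrib[symmetric] sum_distrib_right[symmetric])
      qed
      then show "(\<Sum>b\<in>UNIV. mu b * ((Vt P n b - real n * J) * inverse (real n))) + J = 1 / real n * u n"
        by (simp add: mu1 u_def)
    qed
    show ?thesis using Lim_transform_eventually[OF t e] by simp
  qed
  have lim_l: "(\<lambda>n. J - 2 * M * inverse (real n)) \<longlonglongrightarrow> J"
    using tendsto_diff[OF tendsto_const tendsto_mult[OF tendsto_const lim_inverse_n], of J "2*M"] by simp
  have lim_s: "(\<lambda>n. 1 / real n * s n) \<longlonglongrightarrow> J"
  proof (rule tendsto_sandwich[OF _ _ lim_l lim_u])
    show "\<forall>\<^sub>F n in sequentially. J - 2 * M * inverse (real n) \<le> 1 / real n * s n"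
      using eventually_ge_at_top[of "1::nat"]
    proof (rule eventually_mono)
      fix n :: nat assume "1 \<le> n"
      then have "(real n * J - 2 * M) / real n \<le> s n / real n"
        using s_lb[of n] by (intro divide_right_mono) auto
      then show "J - 2 * M * inverse (real n) \<le> 1 / real n * s n"
        using \<open>1 \<le> n\<close> by (simp add: field_simps)
    qed
    show "\<forall>\<^sub>F n in sequentially. 1 / real n * s n \<le> 1 / real n * u n"
      using s_ub by (intro always_eventually allI mult_left_mono) auto
  qed
  have "(\<lambda>n. ereal (1 / real n * s n)) \<longlonglongrightarrow> ereal J" using lim_s by simp
  then have "liminf (\<lambda>n. ereal (1 / real n * s n)) = ereal J"
    by (intro lim_imp_Liminf) auto
  then show ?thesis unfolding C_FB_UMCO_def s_def by simp
qed

end
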